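(* Let $(F,<_F)$ and $(G,<_G)$ be ordered groups and let $\prec$ be the ordering of $F*G$ described in the context. Then $\prec$ restricts to $<_F$ on $F$ and to $<_G$ on $G$, and for any automorphisms $\phi\colon F\to F$ and $\psi\colon G\to G$ preserving $<_F$ and $<_G$ respectively, the automorphism $\phi*\psi\colon F*G\to F*G$ preserves $\prec$.
   Context: An ordered group is a group with a strict total order invariant under left and right multiplication. Construction of $\prec$ on $F*G$: order $F\times G$ lexicographically ($(f,g)<(f',g')$ iff $f<_Ff'$, or $f=f'$ and $g<_Gg'$). In $R=\mathbb{Z}(F\times G)$ call a nonzero element positive if the coefficient of its largest group element is a positive integer. Let $\rho\colon F*G\to M_2(R[t])$ be the homomorphism with $\rho(f)=\begin{pmatrix} f&(f-1)t\\0&1\end{pmatrix}$ for $f\in F$, $\rho(g)=\begin{pmatrix}1&0\\(g-1)t&g\end{pmatrix}$ for $g\in G$; it is injective. Order the matrix positions as $(1,1)$, $(2,2)$, then the two off-diagonal positions in a fixed order. A nonzero $M=\sum_i M_it^i\in M_2(R[t])$ ($M_i\in M_2(R)$) is positive if for the least $n$ with $M_n\ne0$, the first nonzero entry of $M_n$ is positive in $R$. Set $x\prec y$ iff $\rho(y)-\rho(x)$ is positive. *)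

theory Defs
  imports Main
begin

text \<open>A (possibly non-abelian) group is written additively via the class group_add;
  its order is the linorder of the type. Bi-invariance is the ordered-group axiom.\<close>

definition bi_invariant_order :: "'a::{group_add,linorder} itself \<Rightarrow> bool" where
  "bi_invariant_order T \<longleftrightarrow> (\<forall>a b c :: 'a. a < b \<longrightarrow> c + a < c + b \<and> a + c < b + c)"

definition order_automorphism :: "('a::{group_add,linorder} \<Rightarrow> 'a) \<Rightarrow> bool" where
  "order_automorphism \<phi> \<longleftrightarrow> bij \<phi> \<and> (\<forall>a b. \<phi> (a + b) = \<phi> a + \<phi> b) \<and>
     (\<forall>a b. a < b \<longrightarrow> \<phi> a < \<phi> b)"

definition reduced_word :: "('f::group_add + 'g::group_add) list \<Rightarrow> bool" where
  "reduced_word w \<longleftrightarrow> (\<forall>x\<in>set w. x \<noteq> Inl 0 \<and> x \<noteq> Inr 0) \<and>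
     (\<forall>i. Suc i < length w \<longrightarrow> isl (w ! i) \<noteq> isl (w ! Suc i))"

typedef (overloaded) ('f, 'g) freeprod = "{w :: ('f::group_add + 'g::group_add) list. reduced_word w}"
  by (rule exI[of _ "[]"]) (simp add: reduced_word_def)

definition inF :: "'f::group_add \<Rightarrow> ('f, 'g::group_add) freeprod" where
  "inF f = Abs_freeprod (if f = 0 then [] else [Inl f])"

definition inG :: "'g::group_add \<Rightarrow> ('f::group_add, 'g) freeprod" where
  "inG g = Abs_freeprod (if g = 0 then [] else [Inr g])"

definition freeprod_map :: "('f::group_add \<Rightarrow> 'f) \<Rightarrow> ('g::group_add \<Rightarrow> 'g) \<Rightarrow>
    ('f, 'g) freeprod \<Rightarrow> ('f, 'g) freeprod" where
  "freeprod_map \<phi> \<psi> x = Abs_freeprod (map (map_sum \<phi> \<psi>) (Rep_freeprod x))"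

text \<open>Elements of R: finitely supported functions F x G -> int (group F x G, componentwise).\<close>
type_synonym ('f, 'g) gring = "'f \<times> 'g \<Rightarrow> int"

definition gr_zero :: "('f, 'g) gring" where "gr_zero = (\<lambda>_. 0)"

definition gr_of :: "'f \<times> 'g \<Rightarrow> ('f, 'g) gring" where
  "gr_of h = (\<lambda>x. if x = h then 1 else 0)"

definition gr_one :: "('f::group_add, 'g::group_add) gring" where
  "gr_one = gr_of (0, 0)"

definition gr_add :: "('f, 'g) gring \<Rightarrow> ('f, 'g) gring \<Rightarrow> ('f, 'g) gring" where
  "gr_add a b = (\<lambda>x. a x + b x)"

definition gr_sub :: "('f, 'g) gring \<Rightarrow> ('f, 'g) gring \<Rightarrow> ('f, 'g) gring" where
  "gr_sub a b = (\<lambda>x. a x - b x)"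

definition gr_mult :: "('f::group_add, 'g::group_add) gring \<Rightarrow> ('f, 'g) gring \<Rightarrow> ('f, 'g) gring" where
  "gr_mult a b = (\<lambda>(f, g). \<Sum>k\<in>{k. a k \<noteq> 0}. a k * b (- fst k + f, - snd k + g))"

definition lex_less :: "'f::linorder \<times> 'g::linorder \<Rightarrow> 'f \<times> 'g \<Rightarrow> bool" where
  "lex_less x y \<longleftrightarrow> fst x < fst y \<or> (fst x = fst y \<and> snd x < snd y)"

definition gr_positive :: "('f::linorder, 'g::linorder) gring \<Rightarrow> bool" where
  "gr_positive a \<longleftrightarrow> (\<exists>h. a h > 0 \<and> (\<forall>h'. lex_less h h' \<longrightarrow> a h' = 0))"

text \<open>An element of M_2(R[t]) is given by its coefficient matrices M_n (n :: nat, coefficient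
  of t^n), each indexed by i, j in {0,1} (0 = first row/column, 1 = second).\<close>
type_synonym ('f, 'g) pmat = "nat \<Rightarrow> nat \<Rightarrow> nat \<Rightarrow> ('f, 'g) gring"

definition pm_one :: "('f::group_add, 'g::group_add) pmat" where
  "pm_one = (\<lambda>n i j. if n = 0 \<and> i = j then gr_one else gr_zero)"

definition pm_sub :: "('f, 'g) pmat \<Rightarrow> ('f, 'g) pmat \<Rightarrow> ('f, 'g) pmat" where
  "pm_sub A B = (\<lambda>n i j. gr_sub (A n i j) (B n i j))"

definition pm_mult :: "('f::group_add, 'g::group_add) pmat \<Rightarrow> ('f, 'g) pmat \<Rightarrow> ('f, 'g) pmat" where
  "pm_mult A B = (\<lambda>n i j h. \<Sum>a\<le>n. \<Sum>k<2. gr_mult (A a i k) (B (n - a) k j) h)"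

text \<open>rho(f) = [[f, (f-1)t],[0,1]], rho(g) = [[1,0],[(g-1)t, g]].\<close>
definition rho_F :: "'f::group_add \<Rightarrow> ('f, 'g::group_add) pmat" where
  "rho_F f = (\<lambda>n i j.
     if n = 0 then (if i = 0 \<and> j = 0 then gr_of (f, 0)
                    else if i = 1 \<and> j = 1 then gr_one else gr_zero)
     else if n = 1 \<and> i = 0 \<and> j = 1 then gr_sub (gr_of (f, 0)) gr_one
     else gr_zero)"

definition rho_G :: "'g::group_add \<Rightarrow> ('f::group_add, 'g) pmat" where
  "rho_G g = (\<lambda>n i j.
     if n = 0 then (if i = 0 \<and> j = 0 then gr_one
                    else if i = 1 \<and> j = 1 then gr_of (0, g) else gr_zero)
     else if n = 1 \<and> i = 1 \<and> j = 0 then gr_sub (gr_of (0, g)) gr_one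
     else gr_zero)"

definition rho_letter :: "'f::group_add + 'g::group_add \<Rightarrow> ('f, 'g) pmat" where
  "rho_letter x = (case x of Inl f \<Rightarrow> rho_F f | Inr g \<Rightarrow> rho_G g)"

definition rho :: "('f::group_add, 'g::group_add) freeprod \<Rightarrow> ('f, 'g) pmat" where
  "rho x = foldr (\<lambda>l M. pm_mult (rho_letter l) M) (Rep_freeprod x) pm_one"

definition entry_list :: "bool \<Rightarrow> ('f, 'g) pmat \<Rightarrow> nat \<Rightarrow> ('f, 'g) gring list" where
  "entry_list sw M n = [M n 0 0, M n 1 1] @
     (if sw then [M n 1 0, M n 0 1] else [M n 0 1, M n 1 0])"

definition pm_positive :: "bool \<Rightarrow> ('f::{group_add,linorder}, 'g::{group_add,linorder}) pmat \<Rightarrow> bool" where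
  "pm_positive sw M \<longleftrightarrow> (\<exists>n. (\<forall>m<n. \<forall>a\<in>set (entry_list sw M m). a = gr_zero) \<and>
      (case filter (\<lambda>a. a \<noteq> gr_zero) (entry_list sw M n) of
         [] \<Rightarrow> False
       | a # _ \<Rightarrow> gr_positive a))"

definition fp_less :: "bool \<Rightarrow> ('f::{group_add,linorder}, 'g::{group_add,linorder}) freeprod \<Rightarrow>
    ('f, 'g) freeprod \<Rightarrow> bool" where
  "fp_less sw x y \<longleftrightarrow> pm_positive sw (pm_sub (rho y) (rho x))"

end

theory Submission
  imports Defs
begin

lemma oa_basic:
  assumes "order_automorphism (\<phi>::'a::{group_add,linorder}\<Rightarrow>'a)"
  shows "bij \<phi>" "\<And>a b. \<phi> (a + b) = \<phi> a + \<phi> b" "\<And>a b. a < b \<Longrightarrow> \<phi> a < \<phi> b"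
  using assms unfolding order_automorphism_def by auto

lemma oa_zero:
  assumes "order_automorphism (\<phi>::'a::{group_add,linorder}\<Rightarrow>'a)" shows "\<phi> 0 = 0"
proof -
  have "\<phi> (0+0) = \<phi> 0 + \<phi> 0" by (rule oa_basic(2)[OF assms])
  hence "\<phi> 0 = \<phi> 0 + \<phi> 0" by simp
  hence "\<phi> 0 + 0 = \<phi> 0 + \<phi> 0" by simp
  thus ?thesis by (simp only: add_left_cancel)
qed

lemma oa_minus:
  assumes "order_automorphism (\<phi>::'a::{group_add,linorder}\<Rightarrow>'a)" shows "\<phi> (- a) = - \<phi> a"
proof -
  have "\<phi> (a + - a) = \<phi> a + \<phi> (- a)" by (rule oa_basic(2)[OF assms])
  hence "\<phi> a + \<phi> (- a) = 0" using oa_zero[OF assms] by simp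
  from minus_unique[OF this] show ?thesis by (rule sym)
qed

lemma oa_inv_f: "order_automorphism \<phi> \<Longrightarrow> inv \<phi> (\<phi> x) = x"
  by (rule inv_f_f[OF bij_is_inj[OF oa_basic(1)]])

lemma oa_f_inv: "order_automorphism \<phi> \<Longrightarrow> \<phi> (inv \<phi> x) = x"
  by (rule surj_f_inv_f[OF bij_is_surj[OF oa_basic(1)]])

lemma oa_inv:
  assumes h: "order_automorphism (\<phi>::'a::{group_add,linorder}\<Rightarrow>'a)"
  shows "order_automorphism (inv \<phi>)"
  unfolding order_automorphism_def
proof (intro conjI allI impI)
  show "bij (inv \<phi>)" using oa_basic(1)[OF h] by (simp add: bij_imp_bij_inv)
  fix a b :: 'a
  have "\<phi> (inv \<phi> a + inv \<phi> b) = a + b"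
    using oa_basic(2)[OF h] oa_f_inv[OF h] by simp
  hence "inv \<phi> (\<phi> (inv \<phi> a + inv \<phi> b)) = inv \<phi> (a + b)" by simp
  thus "inv \<phi> (a + b) = inv \<phi> a + inv \<phi> b" using oa_inv_f[OF h] by simp
next
  fix a b :: 'a assume ab: "a < b"
  show "inv \<phi> a < inv \<phi> b"
  proof (rule ccontr)
    assume "\<not> inv \<phi> a < inv \<phi> b"
    then have "inv \<phi> b < inv \<phi> a \<or> inv \<phi> b = inv \<phi> a" by auto
    then have "\<phi> (inv \<phi> b) \<le> \<phi> (inv \<phi> a)"
      using oa_basic(3)[OF h] by (auto intro: less_imp_le)
    then show False using ab oa_f_inv[OF h] by (simp add: not_less[symmetric])
  qed
qed

lemma oa_inv_eq: "order_automorphism \<phi> \<Longrightarrow> (inv \<phi> x = y) = (x = \<phi> y)"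
  using oa_f_inv[of \<phi> x] oa_inv_f[of \<phi> y] by auto

definition TT :: "('f::group_add \<Rightarrow> 'f) \<Rightarrow> ('g::group_add \<Rightarrow> 'g) \<Rightarrow> ('f,'g) gring \<Rightarrow> ('f,'g) gring" where
  "TT \<phi> \<psi> a = (\<lambda>h. a (inv \<phi> (fst h), inv \<psi> (snd h)))"

definition TM :: "('f::group_add \<Rightarrow> 'f) \<Rightarrow> ('g::group_add \<Rightarrow> 'g) \<Rightarrow> ('f,'g) pmat \<Rightarrow> ('f,'g) pmat" where
  "TM \<phi> \<psi> M = (\<lambda>n i j. TT \<phi> \<psi> (M n i j))"

context
  fixes \<phi> :: "'f::{group_add,linorder} \<Rightarrow> 'f" and \<psi> :: "'g::{group_add,linorder} \<Rightarrow> 'g"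
  assumes oaf: "order_automorphism \<phi>" and oag: "order_automorphism \<psi>"
begin

lemma TT_mult: "TT \<phi> \<psi> (gr_mult a b) = gr_mult (TT \<phi> \<psi> a) (TT \<phi> \<psi> b)"
proof (rule ext, clarify)
  fix f g
  define S where "S = {k. a k \<noteq> 0}"
  have set: "{k. TT \<phi> \<psi> a k \<noteq> 0} = map_prod \<phi> \<psi> ` S"
  proof (rule set_eqI)
    fix k :: "'f \<times> 'g"
    obtain k1 k2 where k: "k = (k1, k2)" by (cases k)
    have "k = map_prod \<phi> \<psi> (inv \<phi> k1, inv \<psi> k2)"
      using k oa_f_inv[OF oaf] oa_f_inv[OF oag] by simp
    moreover have "\<And>x. k = map_prod \<phi> \<psi> x \<Longrightarrow> x = (inv \<phi> k1, inv \<psi> k2)"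
      using k oa_inv_f[OF oaf] oa_inv_f[OF oag] by auto
    ultimately show "k \<in> {k. TT \<phi> \<psi> a k \<noteq> 0} \<longleftrightarrow> k \<in> map_prod \<phi> \<psi> ` S"
      unfolding S_def TT_def using k by (auto simp: image_iff)
  qed
  have inj: "inj_on (map_prod \<phi> \<psi>) S"
    by (rule inj_on_subset[OF map_prod_inj_on[of \<phi> UNIV \<psi> UNIV]])
       (use oa_basic(1)[OF oaf] oa_basic(1)[OF oag] in \<open>auto simp: bij_is_inj\<close>)
  have mf: "inv \<phi> (- \<phi> x + y) = - x + inv \<phi> y" for x y
  proof -
    have "inv \<phi> (- \<phi> x + y) = inv \<phi> (- \<phi> x) + inv \<phi> y" by (rule oa_basic(2)[OF oa_inv[OF oaf]])
    also have "inv \<phi> (- \<phi> x) = - inv \<phi> (\<phi> x)" by (rule oa_minus[OF oa_inv[OF oaf]])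
    also have "inv \<phi> (\<phi> x) = x" by (rule oa_inv_f[OF oaf])
    finally show ?thesis .
  qed
  have mg: "inv \<psi> (- \<psi> x + y) = - x + inv \<psi> y" for x y
  proof -
    have "inv \<psi> (- \<psi> x + y) = inv \<psi> (- \<psi> x) + inv \<psi> y" by (rule oa_basic(2)[OF oa_inv[OF oag]])
    also have "inv \<psi> (- \<psi> x) = - inv \<psi> (\<psi> x)" by (rule oa_minus[OF oa_inv[OF oag]])
    also have "inv \<psi> (\<psi> x) = x" by (rule oa_inv_f[OF oag])
    finally show ?thesis .
  qed
  have "gr_mult (TT \<phi> \<psi> a) (TT \<phi> \<psi> b) (f, g)
      = (\<Sum>k\<in>map_prod \<phi> \<psi> ` S. TT \<phi> \<psi> a k * TT \<phi> \<psi> b (- fst k + f, - snd k + g))"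
    unfolding gr_mult_def set by simp
  also have "\<dots> = (\<Sum>k\<in>S. TT \<phi> \<psi> a (map_prod \<phi> \<psi> k) * TT \<phi> \<psi> b (- fst (map_prod \<phi> \<psi> k) + f, - snd (map_prod \<phi> \<psi> k) + g))"
    by (subst sum.reindex[OF inj]) simp
  also have "\<dots> = (\<Sum>k\<in>S. a k * b (- fst k + inv \<phi> f, - snd k + inv \<psi> g))"
    by (rule sum.cong) (auto simp: TT_def mf mg oa_inv_f[OF oaf] oa_inv_f[OF oag])
  also have "\<dots> = TT \<phi> \<psi> (gr_mult a b) (f, g)"
    unfolding TT_def gr_mult_def S_def by simp
  finally show "TT \<phi> \<psi> (gr_mult a b) (f, g) = gr_mult (TT \<phi> \<psi> a) (TT \<phi> \<psi> b) (f, g)" by simp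
qed

lemma TT_zero: "TT \<phi> \<psi> gr_zero = gr_zero"
  by (simp add: TT_def gr_zero_def)

lemma TT_sub: "TT \<phi> \<psi> (gr_sub a b) = gr_sub (TT \<phi> \<psi> a) (TT \<phi> \<psi> b)"
  by (simp add: TT_def gr_sub_def)

lemma TT_of: "TT \<phi> \<psi> (gr_of (x, y)) = gr_of (\<phi> x, \<psi> y)"
  by (rule ext) (auto simp: TT_def gr_of_def oa_inv_eq[OF oaf] oa_inv_eq[OF oag])

lemma TT_one: "TT \<phi> \<psi> gr_one = gr_one"
  by (simp add: gr_one_def TT_of oa_zero[OF oaf] oa_zero[OF oag])

lemma TM_mult: "TM \<phi> \<psi> (pm_mult A B) = pm_mult (TM \<phi> \<psi> A) (TM \<phi> \<psi> B)"
proof (intro ext)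
  fix n i j h
  have "pm_mult (TM \<phi> \<psi> A) (TM \<phi> \<psi> B) n i j h
     = (\<Sum>a\<le>n. \<Sum>k<2. TT \<phi> \<psi> (gr_mult (A a i k) (B (n - a) k j)) h)"
    unfolding pm_mult_def TM_def TT_mult by simp
  also have "\<dots> = TM \<phi> \<psi> (pm_mult A B) n i j h"
    unfolding TM_def pm_mult_def TT_def by simp
  finally show "TM \<phi> \<psi> (pm_mult A B) n i j h = pm_mult (TM \<phi> \<psi> A) (TM \<phi> \<psi> B) n i j h" by simp
qed

lemma TM_one: "TM \<phi> \<psi> pm_one = pm_one"
  by (intro ext) (simp add: TM_def pm_one_def TT_one TT_zero)

lemma TM_sub: "TM \<phi> \<psi> (pm_sub A B) = pm_sub (TM \<phi> \<psi> A) (TM \<phi> \<psi> B)"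
  by (intro ext) (simp add: TM_def pm_sub_def TT_sub)

lemma TM_letter: "TM \<phi> \<psi> (rho_letter l) = rho_letter (map_sum \<phi> \<psi> l)"
proof (cases l)
  case (Inl f)
  show ?thesis unfolding Inl
    by (intro ext) (simp add: rho_letter_def rho_F_def TM_def if_distrib[of "TT \<phi> \<psi>"]
        TT_sub TT_zero TT_one TT_of oa_zero[OF oag])
next
  case (Inr g)
  show ?thesis unfolding Inr
    by (intro ext) (simp add: rho_letter_def rho_G_def TM_def if_distrib[of "TT \<phi> \<psi>"]
        TT_sub TT_zero TT_one TT_of oa_zero[OF oaf])
qed

lemma Rep_map: "Rep_freeprod (freeprod_map \<phi> \<psi> x) = map (map_sum \<phi> \<psi>) (Rep_freeprod x)"
proof -
  have r: "reduced_word (Rep_freeprod x)" using Rep_freeprod by auto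
  have inj1: "\<phi> a = 0 \<Longrightarrow> a = 0" for a using oa_inv_f[OF oaf, of a] oa_inv_f[OF oaf, of 0] oa_zero[OF oaf] by simp
  have inj2: "\<psi> a = 0 \<Longrightarrow> a = 0" for a using oa_inv_f[OF oag, of a] oa_inv_f[OF oag, of 0] oa_zero[OF oag] by simp
  have "reduced_word (map (map_sum \<phi> \<psi>) (Rep_freeprod x))"
    unfolding reduced_word_def
  proof (intro conjI allI impI ballI)
    fix y assume "y \<in> set (map (map_sum \<phi> \<psi>) (Rep_freeprod x))"
    then obtain z where z: "z \<in> set (Rep_freeprod x)" "y = map_sum \<phi> \<psi> z" by auto
    have "z \<noteq> Inl 0" "z \<noteq> Inr 0" using r z(1) unfolding reduced_word_def by auto
    then show "y \<noteq> Inl 0" "y \<noteq> Inr 0" using z(2) inj1 inj2 by (cases z; auto)+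
  next
    fix i assume "Suc i < length (map (map_sum \<phi> \<psi>) (Rep_freeprod x))"
    then show "isl (map (map_sum \<phi> \<psi>) (Rep_freeprod x) ! i) \<noteq> isl (map (map_sum \<phi> \<psi>) (Rep_freeprod x) ! Suc i)"
      using r unfolding reduced_word_def by (simp add: isl_map_sum)
  qed
  then show ?thesis unfolding freeprod_map_def by (simp add: Abs_freeprod_inverse)
qed

lemma rho_map: "rho (freeprod_map \<phi> \<psi> x) = TM \<phi> \<psi> (rho x)"
proof -
  have "TM \<phi> \<psi> (foldr (\<lambda>l M. pm_mult (rho_letter l) M) w pm_one)
      = foldr (\<lambda>l M. pm_mult (rho_letter l) M) (map (map_sum \<phi> \<psi>) w) pm_one" for w
    by (induction w) (simp_all add: TM_one TM_mult TM_letter)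
  then show ?thesis unfolding rho_def Rep_map by simp
qed

lemma TT_zero_iff: "(TT \<phi> \<psi> a = gr_zero) = (a = gr_zero)"
proof
  assume h: "TT \<phi> \<psi> a = gr_zero"
  show "a = gr_zero"
  proof (rule ext)
    fix k :: "'f \<times> 'g"
    have "TT \<phi> \<psi> a (\<phi> (fst k), \<psi> (snd k)) = 0" using h by (simp add: gr_zero_def)
    then show "a k = gr_zero k" by (simp add: TT_def gr_zero_def oa_inv_f[OF oaf] oa_inv_f[OF oag])
  qed
qed (simp add: TT_zero)

lemma TT_pos: "gr_positive a \<Longrightarrow> gr_positive (TT \<phi> \<psi> a)"
proof -
  assume "gr_positive a"
  then obtain h where h: "a h > 0" "\<And>h'. lex_less h h' \<Longrightarrow> a h' = 0" unfolding gr_positive_def by auto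
  let ?k = "(\<phi> (fst h), \<psi> (snd h))"
  have "TT \<phi> \<psi> a ?k > 0" using h(1) by (simp add: TT_def oa_inv_f[OF oaf] oa_inv_f[OF oag])
  moreover have "TT \<phi> \<psi> a h' = 0" if "lex_less ?k h'" for h'
  proof -
    have m1: "\<And>x y. x < y \<Longrightarrow> inv \<phi> x < inv \<phi> y" using oa_basic(3)[OF oa_inv[OF oaf]] .
    have m2: "\<And>x y. x < y \<Longrightarrow> inv \<psi> x < inv \<psi> y" using oa_basic(3)[OF oa_inv[OF oag]] .
    have "lex_less h (inv \<phi> (fst h'), inv \<psi> (snd h'))"
    proof (cases "\<phi> (fst h) < fst h'")
      case True
      from m1[OF True] show ?thesis unfolding lex_less_def by (simp add: oa_inv_f[OF oaf])
    next
      case False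
      with that have e: "fst h' = \<phi> (fst h)" and l: "\<psi> (snd h) < snd h'" unfolding lex_less_def by auto
      from m2[OF l] show ?thesis unfolding lex_less_def e by (simp add: oa_inv_f[OF oaf] oa_inv_f[OF oag])
    qed
    then show ?thesis using h(2) by (simp add: TT_def)
  qed
  ultimately show ?thesis unfolding gr_positive_def by blast
qed

lemma TM_pos: "pm_positive sw M \<Longrightarrow> pm_positive sw (TM \<phi> \<psi> M)"
proof -
  have el: "entry_list sw (TM \<phi> \<psi> M) n = map (TT \<phi> \<psi>) (entry_list sw M n)" for n
    by (simp add: entry_list_def TM_def)
  have fl: "filter (\<lambda>a. a \<noteq> gr_zero) (map (TT \<phi> \<psi>) l) = map (TT \<phi> \<psi>) (filter (\<lambda>a. a \<noteq> gr_zero) l)" for l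
    by (simp add: filter_map comp_def TT_zero_iff)
  assume "pm_positive sw M"
  then obtain n where n: "\<forall>m<n. \<forall>a\<in>set (entry_list sw M m). a = gr_zero"
    "case filter (\<lambda>a. a \<noteq> gr_zero) (entry_list sw M n) of [] \<Rightarrow> False | a # _ \<Rightarrow> gr_positive a"
    unfolding pm_positive_def by blast
  have "\<forall>m<n. \<forall>a\<in>set (entry_list sw (TM \<phi> \<psi> M) m). a = gr_zero"
    using n(1) by (simp add: el TT_zero_iff)
  moreover have "case filter (\<lambda>a. a \<noteq> gr_zero) (entry_list sw (TM \<phi> \<psi> M) n) of [] \<Rightarrow> False | a # _ \<Rightarrow> gr_positive a"
    using n(2) unfolding el fl by (cases "filter (\<lambda>a. a \<noteq> gr_zero) (entry_list sw M n)") (auto intro: TT_pos)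
  ultimately show ?thesis unfolding pm_positive_def by blast
qed

end


lemma neg_add_eq_0': "(- a + b = (0::'a::group_add)) = (a = b)"
  by (auto simp: add_eq_0_iff)

lemma gr_mult_zero_left: "gr_mult gr_zero b = gr_zero"
  by (rule ext) (auto simp: gr_mult_def gr_zero_def)

lemma gr_mult_zero_right: "gr_mult a gr_zero = gr_zero"
  by (rule ext) (auto simp: gr_mult_def gr_zero_def)

lemma gr_mult_one_right:
  assumes fin: "finite {k. a k \<noteq> 0}"
  shows "gr_mult a (gr_one :: ('f::group_add,'g::group_add) gring) = a"
proof (rule ext, clarify)
  fix f :: 'f and g :: 'g
  have "gr_mult a gr_one (f, g) = (\<Sum>k\<in>{k. a k \<noteq> 0}. if k = (f, g) then a k else 0)"
    unfolding gr_mult_def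
  proof (simp, rule sum.cong)
    fix k :: "'f \<times> 'g"
    have "(gr_one (- fst k + f, - snd k + g) :: int) = (if k = (f, g) then 1 else 0)"
      by (cases k) (auto simp: gr_one_def gr_of_def neg_add_eq_0' )
    then show "a k * gr_one (- fst k + f, - snd k + g) = (if k = (f, g) then a k else 0)" by simp
  qed simp
  also have "\<dots> = a (f, g)" using fin by (simp add: sum.delta)
  finally show "gr_mult a gr_one (f, g) = a (f, g)" .
qed

lemma fin_of: "finite {k. gr_of x k \<noteq> 0}"
proof -
  have "{k. gr_of x k \<noteq> 0} \<subseteq> {x}" by (auto simp: gr_of_def)
  thus ?thesis by (rule finite_subset) simp
qed

lemma gr_mult_of_one: "gr_mult (gr_of x) (gr_one :: ('f::group_add,'g::group_add) gring) = gr_of x"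
  by (rule gr_mult_one_right[OF fin_of])

lemma gr_mult_one_one: "gr_mult (gr_one :: ('f::group_add,'g::group_add) gring) gr_one = gr_one"
  using gr_mult_of_one[of "(0,0)"] unfolding gr_one_def .

lemma two_sum: "(\<Sum>k<(2::nat). F k) = F 0 + F 1"
  by (simp add: numeral_2_eq_2)

lemma rho_inF:
  "rho (inF f :: ('f::group_add,'g::group_add) freeprod) 0 0 0 = gr_of (f, 0)"
  "rho (inF f :: ('f::group_add,'g::group_add) freeprod) 0 1 1 = gr_one"
proof -
  have "rho (inF f :: ('f,'g) freeprod) 0 0 0 = gr_of (f, 0) \<and> rho (inF f :: ('f,'g) freeprod) 0 1 1 = gr_one"
  proof (cases "f = 0")
    case True
    have "Rep_freeprod (inF f :: ('f,'g) freeprod) = []"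
      unfolding inF_def True by (simp add: Abs_freeprod_inverse reduced_word_def)
    then show ?thesis unfolding rho_def by (simp add: pm_one_def True gr_one_def)
  next
    case False
    have "Rep_freeprod (inF f :: ('f,'g) freeprod) = [Inl f]"
      unfolding inF_def using False by (simp add: Abs_freeprod_inverse reduced_word_def)
    then show ?thesis unfolding rho_def
      by (simp add: pm_mult_def two_sum rho_letter_def rho_F_def pm_one_def gr_mult_zero_left
          gr_mult_zero_right gr_mult_of_one gr_mult_one_one, simp add: gr_zero_def)
  qed
  then show "rho (inF f :: ('f,'g) freeprod) 0 0 0 = gr_of (f, 0)"
    "rho (inF f :: ('f,'g) freeprod) 0 1 1 = gr_one" by auto
qed

lemma rho_inG:
  "rho (inG g :: ('f::group_add,'g::group_add) freeprod) 0 0 0 = gr_one"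
  "rho (inG g :: ('f::group_add,'g::group_add) freeprod) 0 1 1 = gr_of (0, g)"
proof -
  have "rho (inG g :: ('f,'g) freeprod) 0 0 0 = gr_one \<and> rho (inG g :: ('f,'g) freeprod) 0 1 1 = gr_of (0, g)"
  proof (cases "g = 0")
    case True
    have "Rep_freeprod (inG g :: ('f,'g) freeprod) = []"
      unfolding inG_def True by (simp add: Abs_freeprod_inverse reduced_word_def)
    then show ?thesis unfolding rho_def by (simp add: pm_one_def True gr_one_def)
  next
    case False
    have "Rep_freeprod (inG g :: ('f,'g) freeprod) = [Inr g]"
      unfolding inG_def using False by (simp add: Abs_freeprod_inverse reduced_word_def)
    then show ?thesis unfolding rho_def
      by (simp add: pm_mult_def two_sum rho_letter_def rho_G_def pm_one_def gr_mult_zero_left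
          gr_mult_zero_right gr_mult_of_one gr_mult_one_one, simp add: gr_zero_def)
  qed
  then show "rho (inG g :: ('f,'g) freeprod) 0 0 0 = gr_one"
    "rho (inG g :: ('f,'g) freeprod) 0 1 1 = gr_of (0, g)" by auto
qed

lemma pos_first:
  assumes "filter (\<lambda>a. a \<noteq> gr_zero) (entry_list sw M 0) = a # r"
  shows "pm_positive sw M = gr_positive a"
proof
  assume "pm_positive sw M"
  then obtain n where n: "\<forall>m<n. \<forall>a\<in>set (entry_list sw M m). a = gr_zero"
    "case filter (\<lambda>a. a \<noteq> gr_zero) (entry_list sw M n) of [] \<Rightarrow> False | a # _ \<Rightarrow> gr_positive a"
    unfolding pm_positive_def by blast
  have "n = 0"
  proof (rule ccontr)
    assume "n \<noteq> 0"
    then have "\<forall>a\<in>set (entry_list sw M 0). a = gr_zero" using n(1) by auto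
    then have "filter (\<lambda>a. a \<noteq> gr_zero) (entry_list sw M 0) = []" by (simp add: filter_empty_conv)
    then show False using assms by simp
  qed
  then show "gr_positive a" using n(2) assms by simp
next
  assume "gr_positive a"
  then show "pm_positive sw M" unfolding pm_positive_def using assms
    by (intro exI[of _ 0]) simp
qed

lemma pos_zero:
  assumes "\<And>n i j. M n i j = gr_zero"
  shows "\<not> pm_positive sw M"
  unfolding pm_positive_def entry_list_def using assms by simp

lemma sub_self: "pm_sub A A = (\<lambda>n i j. gr_zero)"
  by (intro ext) (simp add: pm_sub_def gr_sub_def gr_zero_def)

lemma lex_irrefl: "\<not> lex_less x x"
  by (simp add: lex_less_def)

lemma lex_asym: "lex_less x y \<Longrightarrow> \<not> lex_less y x"
  by (auto simp: lex_less_def)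

lemma lex_total: "x \<noteq> y \<Longrightarrow> lex_less x y \<or> lex_less y x"
  by (cases x, cases y) (auto simp: lex_less_def)

lemma gr_pos_diff:
  assumes "x \<noteq> y"
  shows "gr_positive (gr_sub (gr_of x) (gr_of y)) = lex_less y x"
proof
  assume "gr_positive (gr_sub (gr_of x) (gr_of y))"
  then obtain h where h: "gr_sub (gr_of x) (gr_of y) h > 0"
    "\<And>h'. lex_less h h' \<Longrightarrow> gr_sub (gr_of x) (gr_of y) h' = 0"
    unfolding gr_positive_def by blast
  have "h = x" using h(1) by (auto simp: gr_sub_def gr_of_def split: if_splits)
  show "lex_less y x"
  proof (rule ccontr)
    assume "\<not> lex_less y x"
    then have "lex_less x y" using lex_total assms by blast
    then have "gr_sub (gr_of x) (gr_of y) y = 0" using h(2) \<open>h = x\<close> by simp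
    then show False using assms by (simp add: gr_sub_def gr_of_def)
  qed
next
  assume yx: "lex_less y x"
  show "gr_positive (gr_sub (gr_of x) (gr_of y))" unfolding gr_positive_def
  proof (intro exI conjI allI impI)
    show "gr_sub (gr_of x) (gr_of y) x > 0" using assms by (simp add: gr_sub_def gr_of_def)
    fix h' assume "lex_less x h'"
    then have "h' \<noteq> x" "h' \<noteq> y" using lex_irrefl lex_asym yx by blast+
    then show "gr_sub (gr_of x) (gr_of y) h' = 0" by (simp add: gr_sub_def gr_of_def)
  qed
qed

lemma diff_nz: "x \<noteq> y \<Longrightarrow> gr_sub (gr_of x) (gr_of y) \<noteq> gr_zero"
proof
  assume "x \<noteq> y" "gr_sub (gr_of x) (gr_of y) = gr_zero"
  then have "gr_sub (gr_of x) (gr_of y) x = gr_zero x" by simp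
  then show False using \<open>x \<noteq> y\<close> by (simp add: gr_sub_def gr_of_def gr_zero_def)
qed

theorem corollary4p1:
  fixes \<phi> :: "'f::{group_add,linorder} \<Rightarrow> 'f"
    and \<psi> :: "'g::{group_add,linorder} \<Rightarrow> 'g"
    and sw :: bool
  assumes "bi_invariant_order TYPE('f)"
    and "bi_invariant_order TYPE('g)"
  shows "(\<forall>f f' :: 'f. fp_less sw (inF f :: ('f, 'g) freeprod) (inF f') \<longleftrightarrow> f < f')
       \<and> (\<forall>g g' :: 'g. fp_less sw (inG g :: ('f, 'g) freeprod) (inG g') \<longleftrightarrow> g < g')
       \<and> (order_automorphism \<phi> \<longrightarrow> order_automorphism \<psi> \<longrightarrow>
            (\<forall>x y :: ('f, 'g) freeprod. fp_less sw x y \<longrightarrow>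
               fp_less sw (freeprod_map \<phi> \<psi> x) (freeprod_map \<phi> \<psi> y)))"
proof (intro conjI allI impI)
  fix f f' :: 'f
  show "fp_less sw (inF f :: ('f, 'g) freeprod) (inF f') \<longleftrightarrow> f < f'"
  proof (cases "f = f'")
    case True
    then show ?thesis by (simp add: fp_less_def sub_self pos_zero)
  next
    case False
    let ?M = "pm_sub (rho (inF f' :: ('f, 'g) freeprod)) (rho (inF f))"
    have m0: "?M 0 0 0 = gr_sub (gr_of (f', 0)) (gr_of (f, 0))"
      by (simp add: pm_sub_def rho_inF)
    have nz: "?M 0 0 0 \<noteq> gr_zero" unfolding m0 using False by (intro diff_nz) simp
    have "filter (\<lambda>a. a \<noteq> gr_zero) (entry_list sw ?M 0) = ?M 0 0 0 # filter (\<lambda>a. a \<noteq> gr_zero) (tl (entry_list sw ?M 0))"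
      using nz by (simp add: entry_list_def)
    from pos_first[OF this] have "fp_less sw (inF f :: ('f, 'g) freeprod) (inF f') = gr_positive (?M 0 0 0)"
      unfolding fp_less_def .
    also have "\<dots> = lex_less (f, 0::'g) (f', 0)" unfolding m0 using False by (intro gr_pos_diff) simp
    also have "\<dots> = (f < f')" by (simp add: lex_less_def)
    finally show ?thesis .
  qed
next
  fix g g' :: 'g
  show "fp_less sw (inG g :: ('f, 'g) freeprod) (inG g') \<longleftrightarrow> g < g'"
  proof (cases "g = g'")
    case True
    then show ?thesis by (simp add: fp_less_def sub_self pos_zero)
  next
    case False
    let ?M = "pm_sub (rho (inG g' :: ('f, 'g) freeprod)) (rho (inG g))"
    have m0: "?M 0 0 0 = gr_zero"
      by (simp add: pm_sub_def rho_inG gr_sub_def gr_zero_def)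
    have m1: "?M 0 1 1 = gr_sub (gr_of (0, g')) (gr_of (0, g))"
      unfolding pm_sub_def rho_inG by (rule refl)
    have nz: "?M 0 1 1 \<noteq> gr_zero" unfolding m1 using False by (intro diff_nz) simp
    have "filter (\<lambda>a. a \<noteq> gr_zero) (entry_list sw ?M 0) = ?M 0 1 1 # filter (\<lambda>a. a \<noteq> gr_zero) (drop 2 (entry_list sw ?M 0))"
      using nz m0 by (simp add: entry_list_def)
    from pos_first[OF this] have "fp_less sw (inG g :: ('f, 'g) freeprod) (inG g') = gr_positive (?M 0 1 1)"
      unfolding fp_less_def .
    also have "\<dots> = lex_less (0::'f, g) (0, g')" unfolding m1 using False by (intro gr_pos_diff) simp
    also have "\<dots> = (g < g')" by (simp add: lex_less_def)
    finally show ?thesis .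
  qed
next
  fix x y :: "('f, 'g) freeprod"
  assume oaf: "order_automorphism \<phi>" and oag: "order_automorphism \<psi>" and xy: "fp_less sw x y"
  show "fp_less sw (freeprod_map \<phi> \<psi> x) (freeprod_map \<phi> \<psi> y)"
    using TM_pos[OF oaf oag xy[unfolded fp_less_def]]
    unfolding fp_less_def rho_map[OF oaf oag] TM_sub[OF oaf oag] .
qed

end
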